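(* For all integers $n,m\ge 3$, $\gamma_t(C_n\times C_m)\le\gamma_t(C_{n+1}\times C_m)$ and $\gamma_p(C_n\times C_m)\le\gamma_p(C_{n+1}\times C_m)$.
   Context: All graphs are finite, simple and undirected. $C_n$ denotes the cycle of order $n$ and $G\times H$ the Cartesian product of graphs. For a graph $G$ without isolated vertices: a set $D\subseteq V(G)$ is a total dominating set if every vertex of $G$ (including those in $D$) has a neighbour in $D$; $\gamma_t(G)$ is the minimum size of a total dominating set. A set $D\subseteq V(G)$ is a paired dominating set if every vertex outside $D$ has a neighbour in $D$ and the induced subgraph $G[D]$ has a perfect matching; $\gamma_p(G)$ is the minimum size of a paired dominating set. *)

theory Defs
  imports Main
begin

text \<open>A finite simple graph is given by a vertex set V and a symmetric,
irreflexive adjacency relation E (only its restriction to V matters).\<close>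

definition total_dominating_set :: "'a set \<Rightarrow> ('a \<Rightarrow> 'a \<Rightarrow> bool) \<Rightarrow> 'a set \<Rightarrow> bool" where
  "total_dominating_set V E D \<longleftrightarrow> D \<subseteq> V \<and> (\<forall>v\<in>V. \<exists>u\<in>D. E v u)"

definition has_perfect_matching :: "('a \<Rightarrow> 'a \<Rightarrow> bool) \<Rightarrow> 'a set \<Rightarrow> bool" where
  "has_perfect_matching E D \<longleftrightarrow>
     (\<exists>M. (\<forall>e\<in>M. \<exists>u v. e = {u, v} \<and> u \<noteq> v \<and> u \<in> D \<and> v \<in> D \<and> E u v) \<and>
          (\<forall>x\<in>D. \<exists>!e. e \<in> M \<and> x \<in> e))"

definition paired_dominating_set :: "'a set \<Rightarrow> ('a \<Rightarrow> 'a \<Rightarrow> bool) \<Rightarrow> 'a set \<Rightarrow> bool" where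
  "paired_dominating_set V E D \<longleftrightarrow> D \<subseteq> V \<and> (\<forall>v\<in>V - D. \<exists>u\<in>D. E v u) \<and> has_perfect_matching E D"

definition total_domination_number :: "'a set \<Rightarrow> ('a \<Rightarrow> 'a \<Rightarrow> bool) \<Rightarrow> nat" where
  "total_domination_number V E = (LEAST k. \<exists>D. total_dominating_set V E D \<and> card D = k)"

definition paired_domination_number :: "'a set \<Rightarrow> ('a \<Rightarrow> 'a \<Rightarrow> bool) \<Rightarrow> nat" where
  "paired_domination_number V E = (LEAST k. \<exists>D. paired_dominating_set V E D \<and> card D = k)"

definition cycle_adj :: "nat \<Rightarrow> nat \<Rightarrow> nat \<Rightarrow> bool" where
  "cycle_adj n i j \<longleftrightarrow> i < n \<and> j < n \<and> (j = (i + 1) mod n \<or> i = (j + 1) mod n)"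

definition torus_vertices :: "nat \<Rightarrow> nat \<Rightarrow> (nat \<times> nat) set" where
  "torus_vertices n m = {0..<n} \<times> {0..<m}"

definition torus_adj :: "nat \<Rightarrow> nat \<Rightarrow> nat \<times> nat \<Rightarrow> nat \<times> nat \<Rightarrow> bool" where
  "torus_adj n m p q \<longleftrightarrow>
     (fst p = fst q \<and> cycle_adj m (snd p) (snd q)) \<or> (snd p = snd q \<and> cycle_adj n (fst p) (fst q))"

end

theory Submission
  imports Defs
begin
definition col :: "nat \<Rightarrow> nat \<times> nat \<Rightarrow> nat \<times> nat" where
  "col n p = (if fst p = n then (n - 1, snd p) else p)"

lemma suc_mod: "(i::nat) < k \<Longrightarrow> (i + 1) mod k = (if i + 1 = k then 0 else i + 1)"
  by (cases "i + 1 = k") auto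

lemma cyc: "cycle_adj k i j \<longleftrightarrow> i < k \<and> j < k \<and>
   (j = (if i + 1 = k then 0 else i + 1) \<or> i = (if j + 1 = k then 0 else j + 1))"
  unfolding cycle_adj_def by (auto simp: suc_mod)

lemma torus_sym: "torus_adj n m x y \<Longrightarrow> torus_adj n m y x"
  unfolding torus_adj_def cycle_adj_def by auto

lemma torus_irr: "n \<ge> 2 \<Longrightarrow> m \<ge> 2 \<Longrightarrow> \<not> torus_adj n m x x"
  unfolding torus_adj_def cyc by auto

lemma adj_col:
  assumes "n \<ge> 3" "torus_adj (n + 1) m x y"
  shows "torus_adj n m (col n x) (col n y) \<or> col n x = col n y"
  using assms unfolding torus_adj_def cyc col_def
  by (cases x; cases y; auto split: if_splits)

lemma col_eq:
  assumes "col n x = col n y" "x \<noteq> y"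
  shows "snd x = snd y \<and> fst (col n x) = n - 1 \<and> ((fst x = n \<and> fst y = n - 1) \<or> (fst y = n \<and> fst x = n - 1))"
  using assms unfolding col_def by (cases x; cases y; auto split: if_splits)

lemma col_V: "n \<ge> 1 \<Longrightarrow> x \<in> torus_vertices (n + 1) m \<Longrightarrow> col n x \<in> torus_vertices n m"
  unfolding torus_vertices_def col_def by (cases x) auto


lemma pm_empty: "has_perfect_matching E {}"
  unfolding has_perfect_matching_def by (rule exI[of _ "{}"]) auto

lemma pm_insert:
  assumes "has_perfect_matching E D" "x \<notin> D" "y \<notin> D" "x \<noteq> y" "E x y"
  shows "has_perfect_matching E (insert x (insert y D))"
proof -
  obtain M where M1: "\<forall>e\<in>M. \<exists>u v. e = {u, v} \<and> u \<noteq> v \<and> u \<in> D \<and> v \<in> D \<and> E u v"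
    and M2: "\<forall>x\<in>D. \<exists>!e. e \<in> M \<and> x \<in> e"
    using assms(1) unfolding has_perfect_matching_def by (elim exE conjE) 
  have sub: "e \<subseteq> D" if eM: "e \<in> M" for e
  proof -
    obtain u v where "e = {u, v}" "u \<noteq> v" "u \<in> D" "v \<in> D" "E u v" using bspec[OF M1 eM] by (elim exE conjE)
    then show ?thesis by simp
  qed
  let ?M = "insert {x, y} M"
  have A: "\<forall>e\<in>?M. \<exists>u v. e = {u, v} \<and> u \<noteq> v \<and> u \<in> insert x (insert y D) \<and> v \<in> insert x (insert y D) \<and> E u v"
  proof
    fix e assume "e \<in> ?M"
    then consider "e = {x, y}" | "e \<in> M" by fast
    then show "\<exists>u v. e = {u, v} \<and> u \<noteq> v \<and> u \<in> insert x (insert y D) \<and> v \<in> insert x (insert y D) \<and> E u v"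
    proof cases
      case 1 then show ?thesis using assms(4,5) by fast
    next
      case 2
      from bspec[OF M1 2] obtain u v where "e = {u, v}" "u \<noteq> v" "u \<in> D" "v \<in> D" "E u v" by (elim exE conjE)
      then show ?thesis by fast
    qed
  qed
  have B: "\<forall>w\<in>insert x (insert y D). \<exists>!e. e \<in> ?M \<and> w \<in> e"
  proof
    fix w assume w: "w \<in> insert x (insert y D)"
    show "\<exists>!e. e \<in> ?M \<and> w \<in> e"
    proof (cases "w \<in> D")
      case True
      from bspec[OF M2 True] obtain e where e: "e \<in> M" "w \<in> e" and u: "\<And>e'. e' \<in> M \<and> w \<in> e' \<Longrightarrow> e' = e"
        by (elim ex1E conjE) blast
      have nw: "w \<noteq> x" "w \<noteq> y" using True assms(2,3) by auto
      show ?thesis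
      proof (rule ex1I[of _ e])
        show "e \<in> ?M \<and> w \<in> e" using e by simp
      next
        fix e' assume "e' \<in> ?M \<and> w \<in> e'"
        then show "e' = e" using u nw by auto
      qed
    next
      case False
      then have wxy: "w \<in> {x, y}" using w by auto
      have nM: "\<And>e. e \<in> M \<Longrightarrow> w \<notin> e" using sub False by auto
      show ?thesis
      proof (rule ex1I[of _ "{x,y}"])
        show "{x, y} \<in> ?M \<and> w \<in> {x, y}" using wxy by simp
      next
        fix e' assume "e' \<in> ?M \<and> w \<in> e'"
        then show "e' = {x, y}" using nM by auto
      qed
    qed
  qed
  show ?thesis unfolding has_perfect_matching_def using A B by blast
qed

definition dm :: "'a set \<Rightarrow> ('a \<Rightarrow> 'a \<Rightarrow> bool) \<Rightarrow> 'a set \<Rightarrow> 'a \<Rightarrow> bool" where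
  "dm V E D v \<longleftrightarrow> v \<in> D \<or> (\<exists>u\<in>D. E v u)"

lemma dm_mono: "dm V E D v \<Longrightarrow> D \<subseteq> D' \<Longrightarrow> dm V E D' v"
  unfolding dm_def by auto

lemma step:
  assumes sym: "\<And>x y. E x y \<Longrightarrow> E y x" and xy: "x \<in> V" "y \<in> V" "E x y" "x \<noteq> y"
    and D: "D \<subseteq> V" "finite D" "has_perfect_matching E D"
  shows "\<exists>D'. D \<subseteq> D' \<and> D' \<subseteq> V \<and> finite D' \<and> has_perfect_matching E D' \<and> card D' \<le> card D + 2
     \<and> (\<forall>v\<in>V. (v = x \<or> v = y \<or> E v x \<or> E v y) \<longrightarrow> dm V E D' v)"
proof -
  have gen: "\<exists>D'. D \<subseteq> D' \<and> D' \<subseteq> V \<and> finite D' \<and> has_perfect_matching E D' \<and> card D' \<le> card D + 2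
     \<and> (\<forall>v\<in>V. (v = x \<or> v = y \<or> E v x \<or> E v y) \<longrightarrow> dm V E D' v)"
    if xy: "x \<in> V" "y \<in> V" "E x y" "x \<noteq> y" and xD: "x \<in> D" for x y
  proof (cases "y \<in> D")
    case True
    have "\<forall>v\<in>V. (v = x \<or> v = y \<or> E v x \<or> E v y) \<longrightarrow> dm V E D v"
      using True xD unfolding dm_def by blast
    then show ?thesis using D by (intro exI[of _ D]) auto
  next
    case yD: False
    show ?thesis
    proof (cases "\<exists>z\<in>V. z \<noteq> y \<and> E y z \<and> z \<notin> D")
      case True
      then obtain z where z: "z \<in> V" "z \<noteq> y" "E y z" "z \<notin> D" by blast
      have c: "card (insert y (insert z D)) \<le> card D + 2"
        using D(2) by (simp add: card_insert_if)
      have "\<forall>v\<in>V. (v = x \<or> v = y \<or> E v x \<or> E v y) \<longrightarrow> dm V E (insert y (insert z D)) v"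
        using xD unfolding dm_def by blast
      then show ?thesis using D c xy z
          pm_insert[OF D(3) yD z(4) z(2)[symmetric] z(3)]
        by (intro exI[of _ "insert y (insert z D)"]) auto
    next
      case False
      have "dm V E D v" if "v \<in> V" "v = x \<or> v = y \<or> E v x \<or> E v y" for v
      proof -
        have Eyx: "E y x" using sym xy(3) .
        show ?thesis
        proof (cases "v = y")
          case True then show ?thesis using Eyx xD unfolding dm_def by blast
        next
          case vy: False
          { assume "E v y" then have "E y v" using sym by blast
            then have "v \<in> D" using False that(1) vy by blast }
          then show ?thesis using that xD vy unfolding dm_def by blast
        qed
      qed
      then show ?thesis using D by (intro exI[of _ D]) auto
    qed
  qed
  show ?thesis
  proof (cases "x \<in> D")
    case True then show ?thesis using gen xy by blast
  next
    case xD: False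
    show ?thesis
    proof (cases "y \<in> D")
      case True
      from gen[OF xy(2) xy(1) sym[OF xy(3)] xy(4)[symmetric] True] show ?thesis
        by (metis (no_types, lifting))
    next
      case yD: False
      have c: "card (insert x (insert y D)) \<le> card D + 2"
        using D(2) by (simp add: card_insert_if)
      have "\<forall>v\<in>V. (v = x \<or> v = y \<or> E v x \<or> E v y) \<longrightarrow> dm V E (insert x (insert y D)) v"
        unfolding dm_def by blast
      then show ?thesis using D c xy pm_insert[OF D(3) xD yD xy(4) xy(3)]
        by (intro exI[of _ "insert x (insert y D)"]) auto
    qed
  qed
qed

lemma greedy:
  fixes F :: "('a \<times> 'a) set"
  assumes fin: "finite F" and sym: "\<And>x y. E x y \<Longrightarrow> E y x"
    and Fok: "\<forall>(x,y)\<in>F. x \<in> V \<and> y \<in> V \<and> E x y \<and> x \<noteq> y"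
  shows "\<exists>D. D \<subseteq> V \<and> finite D \<and> has_perfect_matching E D \<and> card D \<le> 2 * card F \<and>
     (\<forall>(x,y)\<in>F. \<forall>v\<in>V. (v = x \<or> v = y \<or> E v x \<or> E v y) \<longrightarrow> dm V E D v)"
  using fin Fok
proof (induction F rule: finite_induct)
  case empty
  then show ?case using pm_empty by (intro exI[of _ "{}"]) auto
next
  case (insert p F)
  obtain x y where p: "p = (x, y)" by (cases p)
  have xy: "x \<in> V" "y \<in> V" "E x y" "x \<noteq> y" using insert.prems p by auto
  obtain D where D: "D \<subseteq> V" "finite D" "has_perfect_matching E D" "card D \<le> 2 * card F"
    "\<forall>(x,y)\<in>F. \<forall>v\<in>V. (v = x \<or> v = y \<or> E v x \<or> E v y) \<longrightarrow> dm V E D v"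
    using insert by auto
  have cF: "card (insert p F) = card F + 1" using insert by auto
  obtain D' where D': "D \<subseteq> D'" "D' \<subseteq> V" "finite D'" "has_perfect_matching E D'" "card D' \<le> card D + 2"
     "\<forall>v\<in>V. (v = x \<or> v = y \<or> E v x \<or> E v y) \<longrightarrow> dm V E D' v"
    using step[OF sym xy D(1-3)] by blast
  have old: "\<forall>(x,y)\<in>F. \<forall>v\<in>V. (v = x \<or> v = y \<or> E v x \<or> E v y) \<longrightarrow> dm V E D' v"
    using D(5) D'(1) dm_mono by fastforce
  have "card D' \<le> 2 * card (insert p F)" using cF D(4) D'(5) by simp
  then show ?case using D' old p by (intro exI[of _ D']) auto
qed


lemma pm_card:
  fixes D :: "'a set"
  assumes "has_perfect_matching E D" "finite D"
  shows "\<exists>(M::'a set set) a b. finite M \<and> 2 * card M = card D \<and>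
     (\<forall>e\<in>M. a e \<noteq> b e \<and> a e \<in> D \<and> b e \<in> D \<and> E (a e) (b e)) \<and> (\<forall>x\<in>D. \<exists>e\<in>M. x = a e \<or> x = b e)"
proof -
  obtain M where M1: "\<forall>e\<in>M. \<exists>u v. e = {u, v} \<and> u \<noteq> v \<and> u \<in> D \<and> v \<in> D \<and> E u v"
    and M2: "\<forall>x\<in>D. \<exists>!e. e \<in> M \<and> x \<in> e"
    using assms(1) unfolding has_perfect_matching_def by (elim exE conjE)
  obtain a b where ab: "\<forall>e\<in>M. e = {a e, b e} \<and> a e \<noteq> b e \<and> a e \<in> D \<and> b e \<in> D \<and> E (a e) (b e)"
    using bchoice[OF M1] by (metis (no_types, lifting))
  have sub: "M \<subseteq> Pow D"
  proof
    fix e assume "e \<in> M"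
    then have 1: "e = {a e, b e}" and 2: "a e \<in> D" "b e \<in> D" using ab by auto
    from 2 have "{a e, b e} \<subseteq> D" by simp
    then show "e \<in> Pow D" using 1 by (metis PowI)
  qed
  then have finM: "finite M" using assms(2) by (meson finite_Pow_iff finite_subset)
  have U1: "\<Union>M \<subseteq> D" using sub by blast
  have U2: "D \<subseteq> \<Union>M"
  proof
    fix x assume "x \<in> D"
    from bspec[OF M2 this] obtain e where "e \<in> M" "x \<in> e" by (elim ex1E conjE)
    then show "x \<in> \<Union>M" by blast
  qed
  have U: "\<Union>M = D" using U1 U2 by (rule subset_antisym)
  have disj: "pairwise disjnt M"
    unfolding pairwise_def disjnt_def
  proof (intro ballI impI)
    fix e1 e2 assume e: "e1 \<in> M" "e2 \<in> M" "e1 \<noteq> e2"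
    show "e1 \<inter> e2 = {}"
    proof (rule ccontr)
      assume "e1 \<inter> e2 \<noteq> {}"
      then obtain w where w: "w \<in> e1" "w \<in> e2" by blast
      then have "w \<in> D" using sub e by blast
      then show False using M2 e w by blast
    qed
  qed
  have fe: "\<And>e. e \<in> M \<Longrightarrow> finite e" using sub assms(2) finite_subset by blast
  have "card D = sum card M" using card_Union_disjoint[OF disj fe] U by simp
  also have "\<dots> = sum (\<lambda>_. 2) M"
  proof (rule sum.cong)
    fix e assume eM: "e \<in> M"
    have 1: "e = {a e, b e}" and 2: "a e \<noteq> b e" using ab eM by auto
    have "card {a e, b e} = 2" using 2 by simp
    then show "card e = 2" using 1 by metis
  qed simp
  finally have "2 * card M = card D" by simp
  moreover have cov: "\<forall>x\<in>D. \<exists>e\<in>M. x = a e \<or> x = b e"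
  proof
    fix x assume "x \<in> D"
    from bspec[OF M2 this] obtain e where eM: "e \<in> M" and xe: "x \<in> e" by (elim ex1E conjE)
    have "e = {a e, b e}" using ab eM by auto
    then have "x = a e \<or> x = b e" using xe by (metis insert_iff singletonD)
    then show "\<exists>e\<in>M. x = a e \<or> x = b e" using eM by blast
  qed
  moreover have "\<forall>e\<in>M. a e \<noteq> b e \<and> a e \<in> D \<and> b e \<in> D \<and> E (a e) (b e)"
  proof
    fix e assume "e \<in> M"
    from bspec[OF ab this] show "a e \<noteq> b e \<and> a e \<in> D \<and> b e \<in> D \<and> E (a e) (b e)"
      by (elim conjE) (intro conjI; assumption)
  qed
  ultimately have P: "finite M \<and> 2 * card M = card D \<and>
     (\<forall>e\<in>M. a e \<noteq> b e \<and> a e \<in> D \<and> b e \<in> D \<and> E (a e) (b e)) \<and> (\<forall>x\<in>D. \<exists>e\<in>M. x = a e \<or> x = b e)"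
    using finM by simp
  show ?thesis by (rule exI[where x=M], rule exI[where x=a], rule exI[where x=b], rule P)
qed

lemma least_mono:
  assumes ex: "\<exists>D. P D"
    and st: "\<And>D. P D \<Longrightarrow> \<exists>D'. Q D' \<and> card D' \<le> card D"
  shows "(LEAST k. \<exists>D. Q D \<and> card D = k) \<le> (LEAST k. \<exists>D. P D \<and> card D = k)"
proof -
  have "\<exists>k D. P D \<and> card D = k" using ex by blast
  then have "\<exists>D. P D \<and> card D = (LEAST k. \<exists>D. P D \<and> card D = k)"
    by (rule LeastI_ex[where P = "\<lambda>k. \<exists>D. P D \<and> card D = k"])
  then obtain D0 where D0: "P D0" "card D0 = (LEAST k. \<exists>D. P D \<and> card D = k)" by blast
  obtain D' where D': "Q D'" "card D' \<le> card D0" using st[OF D0(1)] by blast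
  have "(LEAST k. \<exists>D. Q D \<and> card D = k) \<le> card D'"
    by (rule Least_le) (use D' in blast)
  then show ?thesis using D'(2) D0(2) by simp
qed

lemma cyc_next: "j < m \<Longrightarrow> cycle_adj m j ((j + 1) mod m)"
  unfolding cycle_adj_def by auto

lemma adj_last: "n \<ge> 3 \<Longrightarrow> torus_adj n m (n - 1, b) (n - 2, b)"
  unfolding torus_adj_def cyc by auto

lemma finV: "finite (torus_vertices n m)"
  unfolding torus_vertices_def by simp

lemma total_step:
  assumes n: "n \<ge> 3" and m: "m \<ge> 3"
    and D: "total_dominating_set (torus_vertices (n + 1) m) (torus_adj (n + 1) m) D"
  shows "\<exists>D'. total_dominating_set (torus_vertices n m) (torus_adj n m) D' \<and> card D' \<le> card D"
proof -
  have DV: "D \<subseteq> torus_vertices (n + 1) m" and Ddom: "\<forall>v\<in>torus_vertices (n + 1) m. \<exists>u\<in>D. torus_adj (n + 1) m v u"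
    using D unfolding total_dominating_set_def by auto
  have finD: "finite D" using DV finV finite_subset by blast
  define B where "B = {j. (n - 1, j) \<in> D \<and> (n, j) \<in> D}"
  define D0 where "D0 = D - (\<lambda>j. (n, j)) ` B"
  define D' where "D' = col n ` D \<union> (\<lambda>j. (n - 2, j)) ` B"
  have Bm: "B \<subseteq> {..<m}" using DV unfolding B_def torus_vertices_def by auto
  then have finB: "finite B" using finite_subset by blast
  have colD: "col n ` D = col n ` D0"
  proof
    show "col n ` D \<subseteq> col n ` D0"
    proof
      fix z assume "z \<in> col n ` D"
      then obtain x where x: "x \<in> D" "z = col n x" by blast
      show "z \<in> col n ` D0"
      proof (cases "x \<in> (\<lambda>j. (n, j)) ` B")
        case True
        then obtain j where j: "j \<in> B" "x = (n, j)" by blast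
        then have "(n - 1, j) \<in> D0" using n unfolding D0_def B_def by auto
        moreover have "col n (n - 1, j) = z" using x j n unfolding col_def by auto
        ultimately show ?thesis by (metis image_eqI)
      next
        case False then show ?thesis using x unfolding D0_def by blast
      qed
    qed
  next
    show "col n ` D0 \<subseteq> col n ` D" unfolding D0_def by blast
  qed
  have subB: "(\<lambda>j. (n, j)) ` B \<subseteq> D" unfolding B_def by auto
  have cB: "card ((\<lambda>j. (n, j)) ` B) = card B" by (rule card_image) (auto simp: inj_on_def)
  have cD0: "card D0 = card D - card B"
    unfolding D0_def using card_Diff_subset[OF finite_subset[OF subB finD] subB] cB by simp
  have cBD: "card B \<le> card D" using cB card_mono[OF finD subB] by simp
  have "card D' \<le> card (col n ` D0) + card ((\<lambda>j. (n - 2, j)) ` B)"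
    unfolding D'_def colD by (rule card_Un_le)
  also have "\<dots> \<le> card D0 + card B" using card_image_le[OF finB] card_image_le[of D0 "col n"]
    finD D0_def by (meson add_mono finite_Diff)
  finally have card: "card D' \<le> card D" using cD0 cBD by simp
  have s1: "col n ` D \<subseteq> torus_vertices n m" using DV col_V[of n _ m] n by force
  have s2: "(\<lambda>j. (n - 2, j)) ` B \<subseteq> torus_vertices n m" using Bm n by (auto simp: torus_vertices_def)
  have sub: "D' \<subseteq> torus_vertices n m" using s1 s2 unfolding D'_def by blast
  have dom: "\<exists>u\<in>D'. torus_adj n m v u" if v: "v \<in> torus_vertices n m" for v
  proof -
    obtain a b where ab: "v = (a, b)" "a < n" "b < m" using v unfolding torus_vertices_def by auto
    have vb: "v \<in> torus_vertices (n + 1) m" using ab unfolding torus_vertices_def by auto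
    have cv: "col n v = v" using ab unfolding col_def by auto
    obtain u where u: "u \<in> D" "torus_adj (n + 1) m v u" using Ddom vb by blast
    have uv: "u \<noteq> v" using torus_irr[of "n+1" m v] u n m by auto
    show ?thesis
    proof (cases "torus_adj n m (col n v) (col n u)")
      case True then show ?thesis using cv u unfolding D'_def by auto
    next
      case False
      then have "col n v = col n u" using adj_col[OF n u(2)] by blast
      from col_eq[OF this uv[symmetric]] ab cv
      have un: "u = (n, b)" "a = n - 1" by (cases u; auto)+
      have wb: "(n, b) \<in> torus_vertices (n + 1) m" using ab unfolding torus_vertices_def by auto
      obtain u' where u': "u' \<in> D" "torus_adj (n + 1) m (n, b) u'" using Ddom wb by blast
      have u'w: "u' \<noteq> (n, b)" using torus_irr[of "n+1" m "(n,b)"] u' n m by auto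
      have cw: "col n (n, b) = v" using ab un unfolding col_def by simp
      show ?thesis
      proof (cases "torus_adj n m (col n (n, b)) (col n u')")
        case True then show ?thesis using cw u' unfolding D'_def by auto
      next
        case False
        then have "col n (n, b) = col n u'" using adj_col[OF n u'(2)] by blast
        from col_eq[OF this u'w[symmetric]] n
        have "u' = (n - 1, b)" by (cases u'; auto)
        then have "b \<in> B" using u' u un unfolding B_def by auto
        then have "(n - 2, b) \<in> D'" unfolding D'_def by auto
        moreover have "torus_adj n m v (n - 2, b)" using adj_last[OF n] ab un by simp
        ultimately show ?thesis by blast
      qed
    qed
  qed
  show ?thesis using card sub dom unfolding total_dominating_set_def by blast
qed


lemma paired_step:
  assumes n: "n \<ge> 3" and m: "m \<ge> 3"
    and D: "paired_dominating_set (torus_vertices (n + 1) m) (torus_adj (n + 1) m) D"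
  shows "\<exists>D'. paired_dominating_set (torus_vertices n m) (torus_adj n m) D' \<and> card D' \<le> card D"
proof -
  let ?Vb = "torus_vertices (n + 1) m" and ?Eb = "torus_adj (n + 1) m"
  let ?Vs = "torus_vertices n m" and ?Es = "torus_adj n m"
  have DV: "D \<subseteq> ?Vb" and Ddom: "\<forall>v\<in>?Vb - D. \<exists>u\<in>D. ?Eb v u" and pm: "has_perfect_matching ?Eb D"
    using D unfolding paired_dominating_set_def by auto
  have finD: "finite D" using DV finV finite_subset by blast
  obtain M :: "(nat \<times> nat) set set" and a b where M: "finite M" "2 * card M = card D"
     "\<forall>e\<in>M. a e \<noteq> b e \<and> a e \<in> D \<and> b e \<in> D \<and> ?Eb (a e) (b e)" "\<forall>x\<in>D. \<exists>e\<in>M. x = a e \<or> x = b e"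
    using pm_card[OF pm finD] by blast
  define h where "h x y = (if col n x = col n y then ((n - 2, snd x), col n x) else (col n x, col n y))" for x y
  define F where "F = (\<lambda>e. h (a e) (b e)) ` M"
  have finF: "finite F" using M(1) unfolding F_def by simp
  have cF: "card F \<le> card M" unfolding F_def using card_image_le[OF M(1)] .
  have Fok: "\<forall>(x,y)\<in>F. x \<in> ?Vs \<and> y \<in> ?Vs \<and> ?Es x y \<and> x \<noteq> y"
  proof
    fix p assume "p \<in> F"
    then obtain e where e: "e \<in> M" "p = h (a e) (b e)" unfolding F_def by blast
    let ?x = "a e" and ?y = "b e"
    have xy: "?x \<noteq> ?y" "?x \<in> ?Vb" "?y \<in> ?Vb" "?Eb ?x ?y" using M(3) e DV by auto
    show "case p of (x, y) \<Rightarrow> x \<in> ?Vs \<and> y \<in> ?Vs \<and> ?Es x y \<and> x \<noteq> y"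
    proof (cases "col n ?x = col n ?y")
      case True
      from col_eq[OF True xy(1)] have "fst (col n ?x) = n - 1" by blast
      moreover have "snd (col n ?x) = snd ?x" unfolding col_def by simp
      ultimately have cx: "col n ?x = (n - 1, snd ?x)" by (metis prod.collapse)
      have "snd ?x < m" using xy(2) unfolding torus_vertices_def by auto
      moreover have p: "p = ((n - 2, snd ?x), (n - 1, snd ?x))" using e True cx unfolding h_def by simp
      moreover have "torus_adj n m (n - 2, snd ?x) (n - 1, snd ?x)"
        using adj_last[OF n, of m "snd ?x"] torus_sym by blast
      ultimately show ?thesis using n by (simp add: torus_vertices_def)
    next
      case False
      then have "?Es (col n ?x) (col n ?y)" using adj_col[OF n xy(4)] by blast
      then show ?thesis using e False col_V[of n ?x m] col_V[of n ?y m] xy n unfolding h_def by auto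
    qed
  qed
  obtain D' where D': "D' \<subseteq> ?Vs" "finite D'" "has_perfect_matching ?Es D'" "card D' \<le> 2 * card F"
     "\<forall>(x,y)\<in>F. \<forall>v\<in>?Vs. (v = x \<or> v = y \<or> ?Es v x \<or> ?Es v y) \<longrightarrow> dm ?Vs ?Es D' v"
    using greedy[OF finF _ Fok] torus_sym by blast
  have comp: "\<exists>(x,y)\<in>F. col n z = x \<or> col n z = y" if z: "z \<in> D" for z
  proof -
    obtain e where e: "e \<in> M" "z = a e \<or> z = b e" using M(4) z by blast
    have "h (a e) (b e) \<in> F" using e unfolding F_def by blast
    moreover have "col n z = fst (h (a e) (b e)) \<or> col n z = snd (h (a e) (b e))"
      using e unfolding h_def by auto
    moreover obtain x y where xy: "h (a e) (b e) = (x, y)" by (cases "h (a e) (b e)")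
    ultimately have "(x, y) \<in> F" "col n z = x \<or> col n z = y" by auto
    then show ?thesis by blast
  qed
  have dmv: "dm ?Vs ?Es D' v" if v: "v \<in> ?Vs" for v
  proof (cases "v \<in> col n ` D")
    case True
    then obtain z where z: "z \<in> D" "v = col n z" by blast
    obtain x y where "(x,y) \<in> F" "col n z = x \<or> col n z = y" using comp[OF z(1)] by blast
    then show ?thesis using D'(5) v z by blast
  next
    case False
    have vb: "v \<in> ?Vb" and cv: "col n v = v" using v unfolding torus_vertices_def col_def by auto
    have "v \<notin> D" using False cv by force
    then obtain u where u: "u \<in> D" "?Eb v u" using Ddom vb by blast
    have "col n u \<noteq> v" using False u(1) by blast
    then have adj: "?Es v (col n u)" using adj_col[OF n u(2)] cv by metis
    obtain x y where xy: "(x,y) \<in> F" "col n u = x \<or> col n u = y" using comp[OF u(1)] by blast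
    then show ?thesis using D'(5) v adj by blast
  qed
  have "\<forall>v\<in>?Vs - D'. \<exists>u\<in>D'. ?Es v u" using dmv unfolding dm_def by blast
  moreover have "card D' \<le> card D" using D'(4) cF M(2) by simp
  ultimately show ?thesis using D' unfolding paired_dominating_set_def by blast
qed

theorem lemma5p1:
  fixes n m :: nat
  assumes "n \<ge> 3" and "m \<ge> 3"
  shows "total_domination_number (torus_vertices n m) (torus_adj n m)
           \<le> total_domination_number (torus_vertices (n + 1) m) (torus_adj (n + 1) m)
       \<and> paired_domination_number (torus_vertices n m) (torus_adj n m)
           \<le> paired_domination_number (torus_vertices (n + 1) m) (torus_adj (n + 1) m)"
proof
  have "total_dominating_set (torus_vertices (n + 1) m) (torus_adj (n + 1) m) (torus_vertices (n + 1) m)"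
    unfolding total_dominating_set_def
  proof (intro conjI ballI)
    fix v assume v: "v \<in> torus_vertices (n + 1) m"
    then have "(fst v, (snd v + 1) mod m) \<in> torus_vertices (n + 1) m"
      "torus_adj (n + 1) m v (fst v, (snd v + 1) mod m)"
      using assms cyc_next[of "snd v" m] unfolding torus_vertices_def torus_adj_def by auto
    then show "\<exists>u\<in>torus_vertices (n + 1) m. torus_adj (n + 1) m v u" by blast
  qed simp
  then show "total_domination_number (torus_vertices n m) (torus_adj n m)
           \<le> total_domination_number (torus_vertices (n + 1) m) (torus_adj (n + 1) m)"
    unfolding total_domination_number_def
    by (intro least_mono) (use total_step[OF assms] in blast)+
next
  let ?V = "torus_vertices (n + 1) m" and ?E = "torus_adj (n + 1) m"
  define F where "F = (\<lambda>p. (p, (fst p, (snd p + 1) mod m))) ` ?V"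
  have Fok: "\<forall>(x,y)\<in>F. x \<in> ?V \<and> y \<in> ?V \<and> ?E x y \<and> x \<noteq> y"
  proof
    fix p assume "p \<in> F"
    then obtain v where v: "v \<in> ?V" "p = (v, (fst v, (snd v + 1) mod m))" unfolding F_def by blast
    have "snd v < m" using v unfolding torus_vertices_def by auto
    moreover have "(snd v + 1) mod m \<noteq> snd v" using suc_mod[of "snd v" m] assms \<open>snd v < m\<close> by (auto split: if_splits)
    ultimately show "case p of (x, y) \<Rightarrow> x \<in> ?V \<and> y \<in> ?V \<and> ?E x y \<and> x \<noteq> y"
      using v assms cyc_next[of "snd v" m] unfolding torus_vertices_def torus_adj_def
      by (cases v) auto
  qed
  obtain D where D: "D \<subseteq> ?V" "has_perfect_matching ?E D"
     "\<forall>(x,y)\<in>F. \<forall>v\<in>?V. (v = x \<or> v = y \<or> ?E v x \<or> ?E v y) \<longrightarrow> dm ?V ?E D v"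
  proof -
    have finF: "finite F" unfolding F_def using finV by simp
    from greedy[OF finF torus_sym Fok] show ?thesis using that by blast
  qed
  have "\<forall>v\<in>?V. dm ?V ?E D v"
  proof
    fix v assume "v \<in> ?V"
    moreover have "(v, (fst v, (snd v + 1) mod m)) \<in> F" using \<open>v \<in> ?V\<close> unfolding F_def by blast
    ultimately show "dm ?V ?E D v" using D(3) by blast
  qed
  then have "paired_dominating_set ?V ?E D" using D unfolding paired_dominating_set_def dm_def by blast
  then show "paired_domination_number (torus_vertices n m) (torus_adj n m)
           \<le> paired_domination_number (torus_vertices (n + 1) m) (torus_adj (n + 1) m)"
    unfolding paired_domination_number_def
    by (intro least_mono) (use paired_step[OF assms] in blast)+
qed

end
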